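(* Let $f:\mathbb{R}^n\to\mathbb{R}$ be $\mathcal C^2$, $\mu$-strongly convex, with $L$-Lipschitz gradient and $\eta$-Lipschitz Hessian $\nabla^2 f$ (in operator norm). Let $k\ge1$, $C\ge1$, $x_0\in\mathbb{R}^n$, and $x_{i+1}=x_i-\frac1L\nabla f(x_i)$ for $i=0,\dots,k-1$. Define $\xi(x)=\frac1L\big(\nabla^2f(x_0)x-\nabla f(x)\big)$. Then $\xi$ is $\frac{\eta}{L^2}kC\|\nabla f(x_0)\|$-Lipschitz on the set $B_C=\{\sum_{i=0}^kc_ix_i : c\in\mathbb{R}^{k+1},\ \mathbf 1^Tc=1,\ \|c\|_1\le C\}$.
   Context: $\|\cdot\|$ is the Euclidean norm (operator norm for matrices), and $\|c\|_1=\sum_i|c_i|$. *)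

theory Defs
  imports "HOL-Analysis.Analysis"
begin

end

theory Submission
  imports Defs
begin
lemma line_deriv:
  fixes f :: "'a::euclidean_space \<Rightarrow> real"
  assumes grad: "\<And>y. (f has_derivative (\<lambda>h. grad y \<bullet> h)) (at y)"
  shows "((\<lambda>t. f (y + t *\<^sub>R d)) has_real_derivative (grad (y + t *\<^sub>R d) \<bullet> d)) (at t)"
proof -
  have l: "((\<lambda>t. y + t *\<^sub>R d) has_derivative (\<lambda>h. h *\<^sub>R d)) (at t)"
    by (auto intro!: derivative_eq_intros)
  have "((\<lambda>t. f (y + t *\<^sub>R d)) has_derivative (\<lambda>h. grad (y + t *\<^sub>R d) \<bullet> (h *\<^sub>R d))) (at t)"
    using has_derivative_compose[OF l grad] by (simp add: o_def)
  then show ?thesis by (simp add: has_field_derivative_def mult.commute mult_commute_abs)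
qed

lemma first_order:
  fixes f :: "'a::euclidean_space \<Rightarrow> real"
  assumes grad: "\<And>y. (f has_derivative (\<lambda>h. grad y \<bullet> h)) (at y)"
    and cvx: "convex_on UNIV (\<lambda>y. f y - \<mu> / 2 * (norm y)\<^sup>2)" and mu: "\<mu> \<ge> 0"
  shows "f z \<ge> f y + grad y \<bullet> (z - y)"
proof -
  define d where "d = z - y"
  define q where "q = (\<lambda>t::real. f (y + t *\<^sub>R d) - \<mu> / 2 * (norm (y + t *\<^sub>R d))\<^sup>2)"
  have qc: "convex_on UNIV q"
    unfolding convex_on_def q_def
  proof (intro conjI convex_UNIV allI impI ballI)
    fix t b u a :: real assume "0 \<le> u" "0 \<le> a" "u + a = 1"
    have u: "u = 1 - a" using \<open>u + a = 1\<close> by simp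
    have e: "y + ((1 - a) * t + a * b) *\<^sub>R d = (1 - a) *\<^sub>R (y + t *\<^sub>R d) + a *\<^sub>R (y + b *\<^sub>R d)"
      by (simp add: algebra_simps flip: scaleR_add_left)
    show "f (y + (u *\<^sub>R t + a *\<^sub>R b) *\<^sub>R d) - \<mu> / 2 * (norm (y + (u *\<^sub>R t + a *\<^sub>R b) *\<^sub>R d))\<^sup>2
       \<le> u * (f (y + t *\<^sub>R d) - \<mu> / 2 * (norm (y + t *\<^sub>R d))\<^sup>2) + a * (f (y + b *\<^sub>R d) - \<mu> / 2 * (norm (y + b *\<^sub>R d))\<^sup>2)"
      using convex_onD[OF cvx, of a "y + t *\<^sub>R d" "y + b *\<^sub>R d"] \<open>0 \<le> u\<close> \<open>0 \<le> a\<close> \<open>u + a = 1\<close>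
      unfolding u by (simp add: e)
  qed
  have nq: "\<And>t. (norm (y + t *\<^sub>R d))\<^sup>2 = y \<bullet> y + 2 * t * (y \<bullet> d) + t\<^sup>2 * (d \<bullet> d)"
    unfolding power2_norm_eq_inner by (simp add: algebra_simps inner_commute power2_eq_square)
  have "(q has_real_derivative (grad y \<bullet> d - \<mu> / 2 * (2 * (y \<bullet> d)))) (at 0)"
    unfolding q_def nq
    by (rule derivative_eq_intros line_deriv[OF grad] refl | simp)+
  from convex_on_imp_above_tangent[OF qc, of 0 1, OF _ _ _ has_field_derivative_at_within[OF this]]
  have "q 1 - q 0 \<ge> grad y \<bullet> d - \<mu> * (y \<bullet> d)" by simp
  moreover have "(norm z)\<^sup>2 = (norm y)\<^sup>2 + 2 * (y \<bullet> d) + (norm d)\<^sup>2"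
    unfolding d_def dot_square_norm[symmetric] by (simp add: algebra_simps inner_commute)
  ultimately have "f z - f y \<ge> grad y \<bullet> d + \<mu> / 2 * (norm d)\<^sup>2"
    unfolding q_def d_def by (simp add: algebra_simps)
  moreover have "\<mu> / 2 * (norm d)\<^sup>2 \<ge> 0" using mu by simp
  ultimately show ?thesis unfolding d_def by linarith
qed
lemma descent:
  fixes f :: "'a::euclidean_space \<Rightarrow> real"
  assumes grad: "\<And>y. (f has_derivative (\<lambda>h. grad y \<bullet> h)) (at y)"
    and grad_lip: "\<And>y z. norm (grad y - grad z) \<le> L * norm (y - z)" and L: "L \<ge> 0"
  shows "f z \<le> f y + grad y \<bullet> (z - y) + L * (norm (z - y))\<^sup>2"
proof -
  define h where "h = (\<lambda>w. f w - grad y \<bullet> w)"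
  have "norm (h z - h y) \<le> (L * norm (z - y)) * norm (z - y)"
  proof (rule differentiable_bound[where S = "cball y (norm (z - y))" and f' = "\<lambda>w v. grad w \<bullet> v - grad y \<bullet> v"])
    show "convex (cball y (norm (z - y)))" by simp
    fix w assume w: "w \<in> cball y (norm (z - y))"
    show "(h has_derivative (\<lambda>v. grad w \<bullet> v - grad y \<bullet> v)) (at w within cball y (norm (z - y)))"
      unfolding h_def
      by (rule has_derivative_at_withinI, intro has_derivative_diff grad has_derivative_inner_right has_derivative_ident)
    show "onorm (\<lambda>v. grad w \<bullet> v - grad y \<bullet> v) \<le> L * norm (z - y)"
    proof (rule onorm_le)
      fix v
      have "norm (grad w \<bullet> v - grad y \<bullet> v) = \<bar>(grad w - grad y) \<bullet> v\<bar>" by (simp add: inner_diff_left)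
      also have "\<dots> \<le> norm (grad w - grad y) * norm v" by (rule Cauchy_Schwarz_ineq2)
      also have "\<dots> \<le> (L * norm (w - y)) * norm v" by (rule mult_right_mono[OF grad_lip]) simp
      also have "\<dots> \<le> (L * norm (z - y)) * norm v"
        using w L by (intro mult_right_mono mult_left_mono) (auto simp: dist_norm norm_minus_commute)
      finally show "norm (grad w \<bullet> v - grad y \<bullet> v) \<le> L * norm (z - y) * norm v" .
    qed
  qed (auto simp: dist_norm norm_minus_commute)
  then have "h z - h y \<le> L * (norm (z - y))\<^sup>2" by (simp add: power2_eq_square)
  then show ?thesis unfolding h_def by (simp add: inner_diff_right)
qed

lemma half_cocoercive:
  fixes f :: "'a::euclidean_space \<Rightarrow> real"
  assumes grad: "\<And>y. (f has_derivative (\<lambda>h. grad y \<bullet> h)) (at y)"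
    and cvx: "convex_on UNIV (\<lambda>y. f y - \<mu> / 2 * (norm y)\<^sup>2)" and mu: "\<mu> \<ge> 0"
    and grad_lip: "\<And>y z. norm (grad y - grad z) \<le> L * norm (y - z)" and L: "L > 0"
  shows "f y \<ge> f x + grad x \<bullet> (y - x) + (norm (grad y - grad x))\<^sup>2 / (4 * L)"
proof -
  define D where "D = grad y - grad x"
  define z where "z = y - (1 / (2 * L)) *\<^sub>R D"
  have 1: "f z \<ge> f x + grad x \<bullet> (z - x)" by (rule first_order[OF grad cvx mu])
  have 2: "f z \<le> f y + grad y \<bullet> (z - y) + L * (norm (z - y))\<^sup>2"
    by (rule descent[OF grad grad_lip]) (use L in simp)
  have zy: "z - y = - ((1 / (2 * L)) *\<^sub>R D)" unfolding z_def by simp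
  have zx: "z - x = (y - x) - ((1 / (2 * L)) *\<^sub>R D)" unfolding z_def by simp
  have nD: "norm D * norm D = D \<bullet> D" by (metis power2_eq_square power2_norm_eq_inner)
  have n: "L * (norm (z - y))\<^sup>2 = (D \<bullet> D) / (4 * L)"
    unfolding zy using L by (simp add: nD power2_eq_square field_simps)
  have a: "grad y \<bullet> (z - y) = - (grad y \<bullet> D) / (2 * L)" unfolding zy by simp
  have b: "grad x \<bullet> (z - x) = grad x \<bullet> (y - x) - (grad x \<bullet> D) / (2 * L)" unfolding zx by (simp add: inner_diff_right)
  have c: "grad y \<bullet> D - grad x \<bullet> D = D \<bullet> D" unfolding D_def by (simp add: inner_diff_left)
  from 1 2 have "f x + grad x \<bullet> (y - x) - (grad x \<bullet> D) / (2 * L) \<le> f y - (grad y \<bullet> D) / (2 * L) + (D \<bullet> D) / (4 * L)"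
    unfolding n a b by linarith
  then have "f x + grad x \<bullet> (y - x) + (grad y \<bullet> D - grad x \<bullet> D) / (2 * L) - (D \<bullet> D) / (4 * L) \<le> f y"
    by (simp add: diff_divide_distrib)
  then have "f x + grad x \<bullet> (y - x) + (D \<bullet> D) / (2 * L) - (D \<bullet> D) / (4 * L) \<le> f y"
    unfolding c .
  moreover have "(D \<bullet> D) / (2 * L) - (D \<bullet> D) / (4 * L) = (D \<bullet> D) / (4 * L)" using L by (simp add: field_simps)
  ultimately show ?thesis unfolding D_def[symmetric] by (simp add: power2_norm_eq_inner)
qed

lemma nonexpansive:
  fixes f :: "'a::euclidean_space \<Rightarrow> real"
  assumes grad: "\<And>y. (f has_derivative (\<lambda>h. grad y \<bullet> h)) (at y)"
    and cvx: "convex_on UNIV (\<lambda>y. f y - \<mu> / 2 * (norm y)\<^sup>2)" and mu: "\<mu> \<ge> 0"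
    and grad_lip: "\<And>y z. norm (grad y - grad z) \<le> L * norm (y - z)" and L: "L > 0"
  shows "norm ((x - (1 / L) *\<^sub>R grad x) - (y - (1 / L) *\<^sub>R grad y)) \<le> norm (x - y)"
proof -
  define D where "D = grad x - grad y"
  define u where "u = x - y"
  have h1: "f y \<ge> f x + grad x \<bullet> (y - x) + (norm (grad y - grad x))\<^sup>2 / (4 * L)"
    by (rule half_cocoercive[OF grad cvx mu grad_lip L])
  have h2: "f x \<ge> f y + grad y \<bullet> (x - y) + (norm (grad x - grad y))\<^sup>2 / (4 * L)"
    by (rule half_cocoercive[OF grad cvx mu grad_lip L])
  have e1: "grad x \<bullet> (y - x) + grad y \<bullet> (x - y) = - (D \<bullet> u)"
    unfolding D_def u_def by (simp add: inner_diff_left inner_diff_right algebra_simps)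
  have e2: "(norm (grad y - grad x))\<^sup>2 = D \<bullet> D" "(norm (grad x - grad y))\<^sup>2 = D \<bullet> D"
    unfolding D_def by (simp_all add: power2_norm_eq_inner inner_diff_left inner_diff_right inner_commute)
  from h1 h2 have "D \<bullet> u \<ge> (D \<bullet> D) / (2 * L)" unfolding e2 using e1 by (simp add: field_simps) 
  then have key: "2 * (D \<bullet> u) / L \<ge> (D \<bullet> D) / L\<^sup>2" using L by (simp add: field_simps power2_eq_square)
  have "(norm ((x - (1 / L) *\<^sub>R grad x) - (y - (1 / L) *\<^sub>R grad y)))\<^sup>2 = (norm (u - (1 / L) *\<^sub>R D))\<^sup>2"
    unfolding u_def D_def by (simp add: algebra_simps)
  also have "\<dots> = u \<bullet> u - 2 * (D \<bullet> u) / L + (D \<bullet> D) / L\<^sup>2"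
    unfolding power2_norm_eq_inner by (simp add: inner_diff_left inner_diff_right inner_commute power2_eq_square)
  also have "\<dots> \<le> u \<bullet> u" using key by linarith
  also have "\<dots> = (norm (x - y))\<^sup>2" unfolding u_def by (simp add: power2_norm_eq_inner)
  finally show ?thesis by (rule power2_le_imp_le) simp
qed
theorem lemma4:
  fixes f :: "'a::euclidean_space \<Rightarrow> real"
    and grad :: "'a \<Rightarrow> 'a"
    and Hess :: "'a \<Rightarrow> ('a \<Rightarrow>\<^sub>L 'a)"
    and \<mu> L \<eta> C :: real and k :: nat
    and x :: "nat \<Rightarrow> 'a"
  assumes grad: "\<And>y. (f has_derivative (\<lambda>h. grad y \<bullet> h)) (at y)"
    and hess: "\<And>y. (grad has_derivative blinfun_apply (Hess y)) (at y)"
    and hess_cont: "continuous_on UNIV Hess"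
    and mu_pos: "\<mu> > 0"
    and strongly_convex: "convex_on UNIV (\<lambda>y. f y - \<mu> / 2 * (norm y)\<^sup>2)"
    and grad_lip: "\<And>y z. norm (grad y - grad z) \<le> L * norm (y - z)"
    and hess_lip: "\<And>y z. norm (Hess y - Hess z) \<le> \<eta> * norm (y - z)"
    and k: "k \<ge> 1" and C: "C \<ge> 1"
    and iter: "\<And>i. i < k \<Longrightarrow> x (Suc i) = x i - (1 / L) *\<^sub>R grad (x i)"
  shows "(\<eta> / L\<^sup>2 * real k * C * norm (grad (x 0)))-lipschitz_on
           {(\<Sum>i\<le>k. c i *\<^sub>R x i) | c. (\<Sum>i\<le>k. c i) = 1 \<and> (\<Sum>i\<le>k. \<bar>c i\<bar>) \<le> C}
           (\<lambda>y. (1 / L) *\<^sub>R (Hess (x 0) y - grad y))"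
proof -
  obtain e :: 'a where e: "e \<in> Basis" using nonempty_Basis by blast
  then have ne: "norm e = 1" by simp
  have L0: "L \<ge> 0" using grad_lip[of e 0] ne by (metis mult.right_neutral norm_ge_zero order_trans diff_zero)
  have eta0: "\<eta> \<ge> 0" using hess_lip[of e 0] ne by (metis mult.right_neutral norm_ge_zero order_trans diff_zero)
  define B where "B = {(\<Sum>i\<le>k. c i *\<^sub>R x i) | c. (\<Sum>i\<le>k. c i) = 1 \<and> (\<Sum>i\<le>k. \<bar>c i\<bar>) \<le> C}"
  show ?thesis
  proof (cases "L = 0")
    case True
    then show ?thesis by (simp add: lipschitz_on_def)
  next
    case False
    then have L: "L > 0" using L0 by simp
    define G where "G = norm (grad (x 0))"
    have step: "norm (x (Suc i) - x i) \<le> G / L" if "i < k" for i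
      using that
    proof (induction i)
      case 0
      then show ?case using iter[of 0] L by (simp add: G_def)
    next
      case (Suc i)
      have "x (Suc (Suc i)) - x (Suc i) = (x (Suc i) - (1 / L) *\<^sub>R grad (x (Suc i))) - (x i - (1 / L) *\<^sub>R grad (x i))"
        using iter[of "Suc i"] iter[of i] Suc.prems by simp
      then have "norm (x (Suc (Suc i)) - x (Suc i)) \<le> norm (x (Suc i) - x i)"
        using nonexpansive[OF grad strongly_convex _ grad_lip L] mu_pos by simp
      then show ?case using Suc by simp
    qed
    have dist0: "norm (x i - x 0) \<le> real i * G / L" if "i \<le> k" for i
      using that
    proof (induction i)
      case 0
      then show ?case by simp
    next
      case (Suc i)
      have "norm (x (Suc i) - x 0) \<le> norm (x (Suc i) - x i) + norm (x i - x 0)"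
        by (metis diff_add_cancel norm_triangle_ineq add.commute add_diff_eq)
      also have "\<dots> \<le> G / L + real i * G / L" using step[of i] Suc by simp
      also have "\<dots> = real (Suc i) * G / L" by (simp add: add_divide_distrib algebra_simps)
      finally show ?case .
    qed
    have distk: "norm (x i - x 0) \<le> real k * G / L" if "i \<le> k" for i
    proof -
      have "real i * G / L \<le> real k * G / L"
        using that L by (intro divide_right_mono mult_right_mono) (auto simp: G_def)
      then show ?thesis using dist0[OF that] by linarith
    qed
    define R where "R = real k * C * G / L"
    have inB: "norm (y - x 0) \<le> R" if yB: "y \<in> B" for y
    proof -
      obtain c where y: "y = (\<Sum>i\<le>k. c i *\<^sub>R x i)" and c1: "(\<Sum>i\<le>k. c i) = 1"
        and cC: "(\<Sum>i\<le>k. \<bar>c i\<bar>) \<le> C"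
        using yB unfolding B_def by blast
      have "y - x 0 = (\<Sum>i\<le>k. c i *\<^sub>R (x i - x 0))"
      proof -
        have "(\<Sum>i\<le>k. c i *\<^sub>R x 0) = x 0" using c1 by (simp flip: scaleR_sum_left)
        then show ?thesis unfolding y by (simp add: scaleR_diff_right sum_subtractf)
      qed
      then have "norm (y - x 0) \<le> (\<Sum>i\<le>k. norm (c i *\<^sub>R (x i - x 0)))"
        by (simp add: norm_sum del: norm_scaleR)
      also have "\<dots> \<le> (\<Sum>i\<le>k. \<bar>c i\<bar> * (real k * G / L))"
        by (intro sum_mono) (simp only: norm_scaleR real_norm_def, intro mult_left_mono distk, auto)
      also have "\<dots> = (\<Sum>i\<le>k. \<bar>c i\<bar>) * (real k * G / L)" by (rule sum_distrib_right[symmetric])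
      also have "\<dots> \<le> C * (real k * G / L)"
        using L cC by (intro mult_right_mono) (auto simp: G_def)
      finally show ?thesis unfolding R_def by (simp add: field_simps)
    qed
    have lin: "((\<lambda>y. blinfun_apply (Hess (x 0)) y) has_derivative blinfun_apply (Hess (x 0))) (at w within S)" for w S
      by (rule bounded_linear_imp_has_derivative) (rule blinfun.bounded_linear_right)
    have main: "norm ((1 / L) *\<^sub>R (Hess (x 0) y - grad y) - (1 / L) *\<^sub>R (Hess (x 0) z - grad z))
        \<le> ((1 / L) * (\<eta> * R)) * norm (y - z)" if "y \<in> B" "z \<in> B" for y z
    proof (rule differentiable_bound[where S = "cball (x 0) R" and f' = "\<lambda>w v. (1 / L) *\<^sub>R (Hess (x 0) v - Hess w v)"])
      show "convex (cball (x 0) R)" by simp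
      show "y \<in> cball (x 0) R" "z \<in> cball (x 0) R" using inB that by (auto simp: dist_norm norm_minus_commute)
      fix w assume w: "w \<in> cball (x 0) R"
      show "((\<lambda>y. (1 / L) *\<^sub>R (Hess (x 0) y - grad y)) has_derivative (\<lambda>v. (1 / L) *\<^sub>R (Hess (x 0) v - Hess w v))) (at w within cball (x 0) R)"
        by (intro has_derivative_scaleR_right has_derivative_diff lin has_derivative_at_withinI[OF hess])
      show "onorm (\<lambda>v. (1 / L) *\<^sub>R (Hess (x 0) v - Hess w v)) \<le> (1 / L) * (\<eta> * R)"
      proof (rule onorm_le)
        fix v
        have "norm ((1 / L) *\<^sub>R (Hess (x 0) v - Hess w v)) = (1 / L) * norm (blinfun_apply (Hess (x 0) - Hess w) v)"
          using L by (simp add: blinfun.diff_left)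
        also have "\<dots> \<le> (1 / L) * (norm (Hess (x 0) - Hess w) * norm v)"
          using L by (intro mult_left_mono norm_blinfun) auto
        also have "\<dots> \<le> (1 / L) * ((\<eta> * norm (x 0 - w)) * norm v)"
          using L by (intro mult_left_mono mult_right_mono hess_lip) auto
        also have "\<dots> \<le> (1 / L) * ((\<eta> * R) * norm v)"
          using L w eta0 by (intro mult_left_mono mult_right_mono) (auto simp: dist_norm)
        finally show "norm ((1 / L) *\<^sub>R (Hess (x 0) v - Hess w v)) \<le> (1 / L) * (\<eta> * R) * norm v"
          by simp
      qed
    qed
    have const: "(1 / L) * (\<eta> * R) = \<eta> / L\<^sup>2 * real k * C * norm (grad (x 0))"
      unfolding R_def G_def using L by (simp add: field_simps power2_eq_square)
    have "0 \<le> \<eta> / L\<^sup>2 * real k * C * norm (grad (x 0))"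
      using eta0 C by simp
    then show ?thesis
      unfolding B_def[symmetric]
    proof (intro lipschitz_onI)
      fix y z assume "y \<in> B" "z \<in> B"
      from main[OF this] show "dist ((1 / L) *\<^sub>R (Hess (x 0) y - grad y)) ((1 / L) *\<^sub>R (Hess (x 0) z - grad z))
          \<le> \<eta> / L\<^sup>2 * real k * C * norm (grad (x 0)) * dist y z"
        unfolding const dist_norm .
    qed
  qed
qed
end
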